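(* Let $\alpha,\beta,\gamma\in\mathbb{R}$, and let $G_3$ be the connected, simply connected Lie group whose Lie algebra $\mathfrak{g}_3$ has a basis $\{e_1,e_2,e_3\}$ with $[e_1,e_2]=-\gamma e_3$, $[e_1,e_3]=-\beta e_2$, $[e_2,e_3]=\alpha e_1$, equipped with the left-invariant Lorentzian metric $g$ for which $\{e_1,e_2,e_3\}$ is pseudo-orthonormal with $e_3$ timelike, and with the product structure $J$. Let $\lambda_0,c\in\mathbb{R}$. Then there exists a derivation $D$ of $\mathfrak{g}_3$ with $\widetilde{\mathrm{Ric}}^0=(s^0\lambda_0+c)\mathrm{Id}+D$ (i.e. $(G_3,g,J)$ is an algebraic Schouten soliton associated to the canonical connection $\nabla^0$) if and only if one of the following holds: (i) $\alpha=\beta=\gamma=0$ (for all $c$); (ii) $\alpha=\beta=0$, $\gamma\neq0$ and $c=\gamma^2-\gamma^2\lambda_0$; (iii) ($\alpha\neq0$ or $\beta\neq0$), $\gamma=0$ and $c=0$; (iv) ($\alpha\neq0$ or $\beta\neq0$), $\gamma=\alpha+\beta$ and $c=0$.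
   Context: Pseudo-orthonormal means $g(e_1,e_1)=g(e_2,e_2)=1$, $g(e_3,e_3)=-1$, $g(e_i,e_j)=0$ for $i\neq j$; left-invariant tensors are identified with their values on $\mathfrak{g}$. $\nabla$ is the Levi-Civita connection of $g$. The product structure $J$ is the left-invariant endomorphism with $Je_1=e_1$, $Je_2=e_2$, $Je_3=-e_3$. The canonical connection is $\nabla^0_XY=\nabla_XY-\frac12(\nabla_XJ)JY$, and the Kobayashi–Nomizu connection is $\nabla^1_XY=\nabla^0_XY-\frac14[(\nabla_YJ)JX-(\nabla_{JY}J)X]$. For $k=0,1$: $R^k(X,Y)Z=\nabla^k_X\nabla^k_YZ-\nabla^k_Y\nabla^k_XZ-\nabla^k_{[X,Y]}Z$; $\rho^k(X,Y)=-g(R^k(X,e_1)Y,e_1)-g(R^k(X,e_2)Y,e_2)+g(R^k(X,e_3)Y,e_3)$; $\widetilde\rho^k(X,Y)=\frac12(\rho^k(X,Y)+\rho^k(Y,X))$; $\widetilde{\mathrm{Ric}}^k$ is defined by $\widetilde\rho^k(X,Y)=g(\widetilde{\mathrm{Ric}}^k(X),Y)$; and $s^k=\widetilde\rho^k(e_1,e_1)+\widetilde\rho^k(e_2,e_2)-\widetilde\rho^k(e_3,e_3)$. A derivation of $\mathfrak{g}$ is a linear map $D$ with $D[X,Y]=[DX,Y]+[X,DY]$. $(G,g,J)$ is an algebraic Schouten soliton associated to $\nabla^k$ (with real constants $\lambda_0,c$) if $\widetilde{\mathrm{Ric}}^k=(s^k\lambda_0+c)\mathrm{Id}+D$ for some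 derivation $D$. *)

theory Defs
  imports "HOL-Analysis.Analysis"
begin

text \<open>The Lie algebra g_3 is modelled as real^3 with standard basis e1, e2, e3
  (indices 1, 2, 3 of the type 3).  Parameters al, be, ga stand for alpha, beta, gamma.\<close>

definition E :: "3 \<Rightarrow> real^3" where "E i = axis i 1"

definition br :: "real \<Rightarrow> real \<Rightarrow> real \<Rightarrow> real^3 \<Rightarrow> real^3 \<Rightarrow> real^3" where
  "br al be ga X Y = vector
     [ al * (X$2 * Y$3 - X$3 * Y$2),
       - be * (X$1 * Y$3 - X$3 * Y$1),
       - ga * (X$1 * Y$2 - X$2 * Y$1) ]"

definition gm :: "real^3 \<Rightarrow> real^3 \<Rightarrow> real" where
  "gm X Y = X$1 * Y$1 + X$2 * Y$2 - X$3 * Y$3"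

text \<open>Raising an index: the unique vector V with gm V (E i) = f (E i) for all i.\<close>
definition sharp :: "(real^3 \<Rightarrow> real) \<Rightarrow> real^3" where
  "sharp f = (\<Sum>i\<in>UNIV. (gm (E i) (E i) * f (E i)) *\<^sub>R E i)"

text \<open>Levi-Civita connection on left-invariant fields (Koszul formula).\<close>
definition LC :: "real \<Rightarrow> real \<Rightarrow> real \<Rightarrow> real^3 \<Rightarrow> real^3 \<Rightarrow> real^3" where
  "LC al be ga X Y = sharp (\<lambda>Z. (1/2) * (gm (br al be ga X Y) Z - gm (br al be ga Y Z) X
                                     + gm (br al be ga Z X) Y))"

definition Jp :: "real^3 \<Rightarrow> real^3" where
  "Jp X = vector [X$1, X$2, - X$3]"

definition nablaJ :: "real \<Rightarrow> real \<Rightarrow> real \<Rightarrow> real^3 \<Rightarrow> real^3 \<Rightarrow> real^3" where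
  "nablaJ al be ga X Y = LC al be ga X (Jp Y) - Jp (LC al be ga X Y)"

definition can0 :: "real \<Rightarrow> real \<Rightarrow> real \<Rightarrow> real^3 \<Rightarrow> real^3 \<Rightarrow> real^3" where
  "can0 al be ga X Y = LC al be ga X Y - (1/2) *\<^sub>R nablaJ al be ga X (Jp Y)"

definition R0 :: "real \<Rightarrow> real \<Rightarrow> real \<Rightarrow> real^3 \<Rightarrow> real^3 \<Rightarrow> real^3 \<Rightarrow> real^3" where
  "R0 al be ga X Y Z = can0 al be ga X (can0 al be ga Y Z) - can0 al be ga Y (can0 al be ga X Z)
                       - can0 al be ga (br al be ga X Y) Z"

definition rho0 :: "real \<Rightarrow> real \<Rightarrow> real \<Rightarrow> real^3 \<Rightarrow> real^3 \<Rightarrow> real" where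
  "rho0 al be ga X Y = - gm (R0 al be ga X (E 1) Y) (E 1) - gm (R0 al be ga X (E 2) Y) (E 2)
                       + gm (R0 al be ga X (E 3) Y) (E 3)"

definition rhot0 :: "real \<Rightarrow> real \<Rightarrow> real \<Rightarrow> real^3 \<Rightarrow> real^3 \<Rightarrow> real" where
  "rhot0 al be ga X Y = (1/2) * (rho0 al be ga X Y + rho0 al be ga Y X)"

text \<open>Ric~^0, defined by rhot0 X Y = gm (Ric0 X) Y.\<close>
definition Ric0 :: "real \<Rightarrow> real \<Rightarrow> real \<Rightarrow> real^3 \<Rightarrow> real^3" where
  "Ric0 al be ga X = sharp (\<lambda>Y. rhot0 al be ga X Y)"

definition s0 :: "real \<Rightarrow> real \<Rightarrow> real \<Rightarrow> real" where
  "s0 al be ga = rhot0 al be ga (E 1) (E 1) + rhot0 al be ga (E 2) (E 2) - rhot0 al be ga (E 3) (E 3)"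

definition is_derivation :: "real \<Rightarrow> real \<Rightarrow> real \<Rightarrow> (real^3 \<Rightarrow> real^3) \<Rightarrow> bool" where
  "is_derivation al be ga D \<longleftrightarrow> linear D \<and>
     (\<forall>X Y. D (br al be ga X Y) = br al be ga (D X) Y + br al be ga X (D Y))"

end

theory Submission
  imports Defs
begin

lemma E_comp: "E i $ j = (if j = i then 1 else 0)"
  by (simp add: E_def axis_def)

lemma vec3_eq: "((x::real^3) = y) \<longleftrightarrow> x$1=y$1 \<and> x$2=y$2 \<and> x$3=y$3"
  by (simp add: vec_eq_iff forall_3)

lemma sharp_c:
  "sharp f $ 1 = f (E 1)" "sharp f $ 2 = f (E 2)" "sharp f $ 3 = - f (E 3)"
  by (simp_all add: sharp_def sum_3 E_comp gm_def)

lemma br_c: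
  "br al be ga X Y $ 1 = al * (X$2 * Y$3 - X$3 * Y$2)"
  "br al be ga X Y $ 2 = - be * (X$1 * Y$3 - X$3 * Y$1)"
  "br al be ga X Y $ 3 = - ga * (X$1 * Y$2 - X$2 * Y$1)"
  by (simp_all add: br_def)

lemma Jp_c: "Jp X $ 1 = X$1" "Jp X $ 2 = X$2" "Jp X $ 3 = - X$3"
  by (simp_all add: Jp_def)

lemma LC_c:
  "LC al be ga X Y $ 1 = (1/2)*(ga*X$3*Y$2 + ga*X$2*Y$3 - be*X$3*Y$2 - be*X$2*Y$3 - al*X$3*Y$2 + al*X$2*Y$3)"
  "LC al be ga X Y $ 2 = (1/2)*(- ga*X$3*Y$1 - ga*X$1*Y$3 + be*X$3*Y$1 - be*X$1*Y$3 + al*X$3*Y$1 + al*X$1*Y$3)"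
  "LC al be ga X Y $ 3 = (1/2)*(ga*X$2*Y$1 - ga*X$1*Y$2 - be*X$2*Y$1 - be*X$1*Y$2 + al*X$2*Y$1 + al*X$1*Y$2)"
  by (simp_all add: LC_def sharp_c gm_def br_c E_comp field_simps)

lemma can0_c:
  "can0 al be ga X Y = vector [((ga-al-be)/2)*X$3*Y$2, -((ga-al-be)/2)*X$3*Y$1, 0]"
  unfolding vec3_eq
  by (simp add: can0_def nablaJ_def LC_c Jp_c field_simps)

lemma R0_c:
  "R0 al be ga X Y Z = vector [((ga-al-be)/2)*(ga * (X$1 * Y$2 - X$2 * Y$1))*Z$2, -((ga-al-be)/2)*(ga * (X$1 * Y$2 - X$2 * Y$1))*Z$1, 0]"
  unfolding vec3_eq R0_def
  by (simp add: can0_c br_c field_simps)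

lemma Ric0_c:
  "Ric0 al be ga X = vector [(ga*(ga-al-be)/2)*X$1, (ga*(ga-al-be)/2)*X$2, 0]"
  unfolding vec3_eq Ric0_def
  by (simp add: sharp_c rhot0_def rho0_def R0_c gm_def E_comp field_simps)

lemma s0_c: "s0 al be ga = ga*(ga-al-be)"
  by (simp add: s0_def rhot0_def rho0_def R0_c gm_def E_comp field_simps)

lemma deriv_diag:
  assumes "ga*(q-2*p) = 0" "be*q = 0" "al*q = 0"
  shows "is_derivation al be ga (\<lambda>X. vector [p*X$1, p*X$2, q*X$3])"
proof -
  have l: "linear (\<lambda>X::real^3. vector [p*X$1, p*X$2, q*X$3] :: real^3)"
    by (rule linearI) (simp_all add: vec3_eq algebra_simps)
  have a: "al = 0 \<or> q = 0" "be = 0 \<or> q = 0" using assms by auto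
  have g: "ga = 0 \<or> q = 2*p" using assms(1) by auto
  show ?thesis unfolding is_derivation_def
    using l a g by (auto simp: vec3_eq br_c algebra_simps)
qed

theorem theorem4p6:
  fixes \<alpha> \<beta> \<gamma> lam0 c :: real
  shows "(\<exists>D. is_derivation \<alpha> \<beta> \<gamma> D \<and>
            (\<forall>X. Ric0 \<alpha> \<beta> \<gamma> X = (s0 \<alpha> \<beta> \<gamma> * lam0 + c) *\<^sub>R X + D X))
         \<longleftrightarrow>
         ((\<alpha> = 0 \<and> \<beta> = 0 \<and> \<gamma> = 0)
          \<or> (\<alpha> = 0 \<and> \<beta> = 0 \<and> \<gamma> \<noteq> 0 \<and> c = \<gamma>^2 - \<gamma>^2 * lam0)
          \<or> ((\<alpha> \<noteq> 0 \<or> \<beta> \<noteq> 0) \<and> \<gamma> = 0 \<and> c = 0)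
          \<or> ((\<alpha> \<noteq> 0 \<or> \<beta> \<noteq> 0) \<and> \<gamma> = \<alpha> + \<beta> \<and> c = 0))"
proof -
  define k where "k = \<gamma>*(\<gamma>-\<alpha>-\<beta>)/2"
  define m where "m = s0 \<alpha> \<beta> \<gamma> * lam0 + c"
  have s: "s0 \<alpha> \<beta> \<gamma> = 2*k" by (simp add: s0_c k_def)
  have R: "\<And>X. Ric0 \<alpha> \<beta> \<gamma> X = vector [k*X$1, k*X$2, 0]" by (simp add: Ric0_c k_def)
  show ?thesis
  proof
    assume "\<exists>D. is_derivation \<alpha> \<beta> \<gamma> D \<and>
            (\<forall>X. Ric0 \<alpha> \<beta> \<gamma> X = (s0 \<alpha> \<beta> \<gamma> * lam0 + c) *\<^sub>R X + D X)"
    then obtain D where hD: "is_derivation \<alpha> \<beta> \<gamma> D"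
      and hR: "\<And>X. Ric0 \<alpha> \<beta> \<gamma> X = m *\<^sub>R X + D X" unfolding m_def by blast
    have DX: "\<And>X. D X = vector [(k-m)*X$1, (k-m)*X$2, -m*X$3]"
    proof -
      fix X
      have "D X = Ric0 \<alpha> \<beta> \<gamma> X - m *\<^sub>R X" using hR[of X] by simp
      then show "D X = vector [(k-m)*X$1, (k-m)*X$2, -m*X$3]"
        by (simp add: R vec3_eq algebra_simps)
    qed
    have dd: "\<And>X Y. D (br \<alpha> \<beta> \<gamma> X Y) = br \<alpha> \<beta> \<gamma> (D X) Y + br \<alpha> \<beta> \<gamma> X (D Y)"
      using hD unfolding is_derivation_def by blast
    have e1: "\<gamma>*(-m - 2*(k-m)) = 0"
      using arg_cong[OF dd[of "E 1" "E 2"], of "\<lambda>v. v$3"]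
      by (simp add: DX br_c E_comp algebra_simps) (metis mult.commute)
    have e2: "\<beta>*m = 0"
      using arg_cong[OF dd[of "E 1" "E 3"], of "\<lambda>v. v$2"]
      by (simp add: DX br_c E_comp algebra_simps)
    have e3: "\<alpha>*m = 0"
      using arg_cong[OF dd[of "E 2" "E 3"], of "\<lambda>v. v$1"]
      by (simp add: DX br_c E_comp algebra_simps)
    show "(\<alpha> = 0 \<and> \<beta> = 0 \<and> \<gamma> = 0)
          \<or> (\<alpha> = 0 \<and> \<beta> = 0 \<and> \<gamma> \<noteq> 0 \<and> c = \<gamma>^2 - \<gamma>^2 * lam0)
          \<or> ((\<alpha> \<noteq> 0 \<or> \<beta> \<noteq> 0) \<and> \<gamma> = 0 \<and> c = 0)
          \<or> ((\<alpha> \<noteq> 0 \<or> \<beta> \<noteq> 0) \<and> \<gamma> = \<alpha> + \<beta> \<and> c = 0)"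
    proof (cases "\<alpha> = 0 \<and> \<beta> = 0")
      case True
      show ?thesis
      proof (cases "\<gamma> = 0")
        case True thus ?thesis using \<open>\<alpha> = 0 \<and> \<beta> = 0\<close> by simp
      next
        case False
        have "m = 2*k" using e1 False by simp
        hence "c = \<gamma>^2 - \<gamma>^2 * lam0" using True unfolding m_def s k_def
          by (simp add: power2_eq_square algebra_simps)
        thus ?thesis using True False by simp
      qed
    next
      case False
      have m0: "m = 0" using e2 e3 False by auto
      have "\<gamma> = 0 \<or> k = 0" using e1 m0 by simp
      hence "\<gamma> = 0 \<or> \<gamma> = \<alpha> + \<beta>" unfolding k_def by auto
      moreover have "k = 0" using \<open>\<gamma> = 0 \<or> k = 0\<close> unfolding k_def by auto
      ultimately show ?thesis using False m0 unfolding m_def s by auto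
    qed
  next
    assume H: "(\<alpha> = 0 \<and> \<beta> = 0 \<and> \<gamma> = 0)
          \<or> (\<alpha> = 0 \<and> \<beta> = 0 \<and> \<gamma> \<noteq> 0 \<and> c = \<gamma>^2 - \<gamma>^2 * lam0)
          \<or> ((\<alpha> \<noteq> 0 \<or> \<beta> \<noteq> 0) \<and> \<gamma> = 0 \<and> c = 0)
          \<or> ((\<alpha> \<noteq> 0 \<or> \<beta> \<noteq> 0) \<and> \<gamma> = \<alpha> + \<beta> \<and> c = 0)"
    have eqs: "\<gamma>*(-m - 2*(k-m)) = 0 \<and> \<beta>*m = 0 \<and> \<alpha>*m = 0"
      using H unfolding m_def s k_def
      by (auto simp: power2_eq_square algebra_simps) (metis distrib_left)
    let ?D = "\<lambda>X. vector [(k-m)*X$1, (k-m)*X$2, -m*X$3] :: real^3"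
    have "is_derivation \<alpha> \<beta> \<gamma> ?D"
      using deriv_diag[of \<gamma> "-m" "k-m" \<beta> \<alpha>] eqs by simp
    moreover have "\<forall>X. Ric0 \<alpha> \<beta> \<gamma> X = (s0 \<alpha> \<beta> \<gamma> * lam0 + c) *\<^sub>R X + ?D X"
      by (simp add: R vec3_eq m_def algebra_simps)
    ultimately show "\<exists>D. is_derivation \<alpha> \<beta> \<gamma> D \<and>
            (\<forall>X. Ric0 \<alpha> \<beta> \<gamma> X = (s0 \<alpha> \<beta> \<gamma> * lam0 + c) *\<^sub>R X + D X)" by blast
  qed
qed

end
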